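(* Let $m\geq 1$ and $n\geq 2$ be integers, let $K$ be an algebraically closed field, and let $p(x_1,\ldots,x_m)\in K\langle x_1,\ldots,x_m\rangle$ be a polynomial with zero constant term. For $k\geq 1$ and $1\leq i_1,\ldots,i_k\leq m$ let $p_{i_1\cdots i_k}$ be the commutative polynomial in $m(k+1)$ variables defined in the context. Suppose that $\mathrm{ord}(p)=r$ with $1\leq r\leq n-1$. Then: (i) $p(K)=\{0\}$, i.e. $p(c_1,\ldots,c_m)=0$ for all $c_1,\ldots,c_m\in K$; (ii) if $r\geq 2$, then $p_{i_1\cdots i_k}$ vanishes at every point of $K^{m(k+1)}$ for all $1\leq i_1,\ldots,i_k\leq m$ and all $k=1,\ldots,r-1$; consequently $p(T_n(K))\subseteq T_n(K)^{(r-1)}$; (iii) there exist $1\leq i_1,\ldots,i_r\leq m$ such that $p_{i_1\cdots i_r}$ does not vanish at some point of $K^{m(r+1)}$.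
   Context: $T_n(K)$ denotes the algebra of $n\times n$ upper triangular matrices over $K$; for $t\geq 0$, $T_n(K)^{(t)}$ is the set of upper triangular matrices whose $(i,j)$ entries vanish whenever $j-i\leq t$. For a $K$-algebra $\mathcal{A}$ let $\mathcal{T}(\mathcal{A})$ be its set of polynomial identities; with $T_1(K)=K$, the order $\mathrm{ord}(p)$ is the least $k\geq 1$ with $p\in\mathcal{T}(T_k(K))$ and $p\notin\mathcal{T}(T_{k+1}(K))$, and $\mathrm{ord}(p)=0$ if $p\notin\mathcal{T}(K)$. The polynomials $p_{i_1\cdots i_k}$: writing $p=\sum_w\lambda_w w$ as a linear combination of nonempty words $w$ in $x_1,\ldots,x_m$, for $\bar z_1,\ldots,\bar z_{k+1}\in K^m$ set $p_{i_1\cdots i_k}(\bar z_1,\ldots,\bar z_{k+1})=\sum_w\lambda_w\sum w_1(\bar z_1)w_2(\bar z_2)\cdots w_{k+1}(\bar z_{k+1})$, where the inner sum runs over all factorizations $w=w_1x_{i_1}w_2x_{i_2}\cdots w_kx_{i_k}w_{k+1}$ with $w_1,\ldots,w_{k+1}$ (possibly empty) words, $w_j(\bar z)$ denotes the value of the monomial $w_j$ at the commuting scalars $\bar z\in K^m$, and the empty word evaluates to $1$. Equivalently, these are the polynomials such that for all $u_i=(a^{(i)}_{jk})\in T_n(K)$ the $(s,t)$ entry ($s<t$) of $p(u_1,\ldots,u_m)$ equals $\sum_{k=1}^{t-s}\sum_{s=j_1<\cdots<j_{k+1}=t,\ 1\le i_1,\ldots,i_k\le m} p_{i_1\cdots i_k}(\bar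 a_{j_1j_1},\ldots,\bar a_{j_{k+1}j_{k+1}})a^{(i_1)}_{j_1j_2}\cdots a^{(i_k)}_{j_kj_{k+1}}$, with $\bar a_{jj}=(a^{(1)}_{jj},\ldots,a^{(m)}_{jj})$. *)

theory Defs
  imports "HOL-Computational_Algebra.Polynomial"
begin

text \<open>Noncommutative polynomials in x_0, ..., x_(m-1) (0-based letters) are represented
by their coefficient function on words (letter lists): nat list => 'a.\<close>

definition nc_poly :: "nat \<Rightarrow> (nat list \<Rightarrow> 'a::zero) \<Rightarrow> bool" where
  "nc_poly m p \<longleftrightarrow> finite {w. p w \<noteq> 0} \<and> (\<forall>w. p w \<noteq> 0 \<longrightarrow> w \<noteq> [] \<and> set w \<subseteq> {..<m})"

text \<open>Square matrices of size k are functions nat => nat => 'a, indices 0..k-1.\<close>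

definition mmul :: "nat \<Rightarrow> (nat \<Rightarrow> nat \<Rightarrow> 'a::comm_ring_1) \<Rightarrow> (nat \<Rightarrow> nat \<Rightarrow> 'a) \<Rightarrow> nat \<Rightarrow> nat \<Rightarrow> 'a" where
  "mmul k A B = (\<lambda>i j. \<Sum>l<k. A i l * B l j)"

definition mone :: "nat \<Rightarrow> nat \<Rightarrow> nat \<Rightarrow> 'a::comm_ring_1" where
  "mone k = (\<lambda>i j. if i = j \<and> i < k then 1 else 0)"

definition upper_tri :: "nat \<Rightarrow> (nat \<Rightarrow> nat \<Rightarrow> 'a::zero) \<Rightarrow> bool" where
  "upper_tri k A \<longleftrightarrow> (\<forall>i j. A i j \<noteq> 0 \<longrightarrow> i \<le> j \<and> j < k)"

definition upper_tri_shift :: "nat \<Rightarrow> nat \<Rightarrow> (nat \<Rightarrow> nat \<Rightarrow> 'a::zero) \<Rightarrow> bool" where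
  "upper_tri_shift k t A \<longleftrightarrow> upper_tri k A \<and> (\<forall>i<k. \<forall>j<k. int j - int i \<le> int t \<longrightarrow> A i j = 0)"

fun wmat :: "nat \<Rightarrow> (nat \<Rightarrow> nat \<Rightarrow> nat \<Rightarrow> 'a::comm_ring_1) \<Rightarrow> nat list \<Rightarrow> nat \<Rightarrow> nat \<Rightarrow> 'a" where
  "wmat k u [] = mone k"
| "wmat k u (x # w) = mmul k (u x) (wmat k u w)"

definition peval :: "nat \<Rightarrow> (nat list \<Rightarrow> 'a::comm_ring_1) \<Rightarrow> (nat \<Rightarrow> nat \<Rightarrow> nat \<Rightarrow> 'a) \<Rightarrow> nat \<Rightarrow> nat \<Rightarrow> 'a" where
  "peval k p u = (\<lambda>i j. \<Sum>w\<in>{w. p w \<noteq> 0}. p w * wmat k u w i j)"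

definition peval_scalar :: "(nat list \<Rightarrow> 'a::comm_ring_1) \<Rightarrow> (nat \<Rightarrow> 'a) \<Rightarrow> 'a" where
  "peval_scalar p c = (\<Sum>w\<in>{w. p w \<noteq> 0}. p w * prod_list (map c w))"

definition is_PI :: "nat \<Rightarrow> (nat list \<Rightarrow> 'a::comm_ring_1) \<Rightarrow> bool" where
  "is_PI k p \<longleftrightarrow> (\<forall>u. (\<forall>x. upper_tri k (u x)) \<longrightarrow> (\<forall>i<k. \<forall>j<k. peval k p u i j = 0))"

text \<open>ord(p): 0 if p is not an identity of K = T_1(K); otherwise the least k >= 1 with
p in T(T_k) and p not in T(T_(k+1)).  (If no such k exists, which the statement never
concerns since it assumes ord p >= 1 is attained, we also return 0.)\<close>
definition ord :: "(nat list \<Rightarrow> 'a::comm_ring_1) \<Rightarrow> nat" where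
  "ord p = (if \<not> is_PI 1 p then 0
            else if (\<exists>k\<ge>1. is_PI k p \<and> \<not> is_PI (Suc k) p)
                 then (LEAST k. k \<ge> 1 \<and> is_PI k p \<and> \<not> is_PI (Suc k) p)
                 else 0)"

text \<open>Sum over all factorizations w = w_1 x_(i_1) w_2 ... x_(i_k) w_(k+1) of
w_1(z_0) w_2(z_1) ... w_(k+1)(z_k), where z j is the point z_j in K^m (coordinates z j 0, ..., z j (m-1)).\<close>
fun fact_sum :: "nat list \<Rightarrow> (nat \<Rightarrow> nat \<Rightarrow> 'a::comm_ring_1) \<Rightarrow> nat list \<Rightarrow> 'a" where
  "fact_sum [] z w = prod_list (map (z 0) w)"
| "fact_sum (i # is) z w =
     (\<Sum>a<length w. if w ! a = i
        then prod_list (map (z 0) (take a w)) * fact_sum is (\<lambda>j. z (Suc j)) (drop (Suc a) w)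
        else 0)"

definition pcomm :: "(nat list \<Rightarrow> 'a::comm_ring_1) \<Rightarrow> nat list \<Rightarrow> (nat \<Rightarrow> nat \<Rightarrow> 'a) \<Rightarrow> 'a" where
  "pcomm p is z = (\<Sum>w\<in>{w. p w \<noteq> 0}. p w * fact_sum is z w)"

end

theory Submission
  imports Defs
begin


fun gfs :: "nat list \<Rightarrow> (nat \<Rightarrow> nat \<Rightarrow> 'a::comm_ring_1) \<Rightarrow> (nat list \<Rightarrow> 'a) \<Rightarrow> nat list \<Rightarrow> 'a" where
  "gfs [] z f w = f w"
| "gfs (i # is) z f w = (\<Sum>a<length w. if w ! a = i
        then prod_list (map (z 0) (take a w)) * gfs is (\<lambda>j. z (Suc j)) f (drop (Suc a) w)
        else 0)"

lemma gfs_cong: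
  "(\<And>v. set v \<subseteq> set w \<Longrightarrow> f v = g v) \<Longrightarrow> gfs is z f w = gfs is z g w"
proof (induction "is" arbitrary: z w)
  case Nil then show ?case by simp
next
  case (Cons i "is")
  have "gfs is (\<lambda>j. z (Suc j)) f (drop (Suc a) w) = gfs is (\<lambda>j. z (Suc j)) g (drop (Suc a) w)" for a
    by (rule Cons.IH) (meson Cons.prems order_trans set_drop_subset)
  then show ?case by (simp only: gfs.simps)
qed

lemma gfs_sum:
  "gfs is z (\<lambda>v. \<Sum>j\<in>J. f j v) w = (\<Sum>j\<in>J. gfs is z (f j) w)"
proof (induction "is" arbitrary: z w)
  case Nil then show ?case by simp
next
  case (Cons i "is")
  have e: "(if P then \<Sum>n\<in>J. h n else 0) = (\<Sum>n\<in>J. if P then h n else 0)" for P and h :: "_ \<Rightarrow> 'a"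
    by simp
  show ?case
    by (simp only: gfs.simps Cons.IH sum_distrib_left e) (rule sum.swap)
qed

lemma gfs_scale:
  "gfs is z (\<lambda>v. c * f v) w = c * gfs is z f w"
proof (induction "is" arbitrary: z w)
  case Nil then show ?case by simp
next
  case (Cons i "is")
  show ?case
    by (simp add: Cons.IH sum_distrib_left if_distrib mult.left_commute cong: if_cong)
qed

lemma gfs_append:
  "gfs is z (\<lambda>v. gfs js z' f v) w
   = gfs (is @ js) (\<lambda>a. if a < length is then z a else z' (a - length is)) f w"
proof (induction "is" arbitrary: z w)
  case Nil then show ?case by simp
next
  case (Cons i "is")
  have e: "(\<lambda>j. if j < length is then z (Suc j) else z' (Suc j - length (i # is)))
     = (\<lambda>a. if a < length is then z (Suc a) else z' (a - length is))" by auto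
  show ?case by (simp only: gfs.simps append_Cons) (rule sum.cong, simp_all add: Cons.IH e)
qed

lemma gfs_prod:
  "gfs is z (\<lambda>v. prod_list (map c v)) w = fact_sum is (\<lambda>a. if a < length is then z a else c) w"
proof (induction "is" arbitrary: z w)
  case Nil then show ?case by simp
next
  case (Cons i "is")
  have e: "(\<lambda>j. if Suc j < Suc (length is) then z (Suc j) else c)
     = (\<lambda>a. if a < length is then z (Suc a) else c)" by auto
  show ?case by (simp only: gfs.simps fact_sum.simps) (rule sum.cong, simp_all add: Cons.IH e)
qed

lemma fact_sum_cong:
  "(\<And>a. a \<le> length is \<Longrightarrow> z a = z' a) \<Longrightarrow> fact_sum is z w = fact_sum is z' w"
proof (induction "is" arbitrary: z z' w)
  case Nil then show ?case by simp
next
  case (Cons i "is")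
  have "fact_sum is (\<lambda>j. z (Suc j)) v = fact_sum is (\<lambda>j. z' (Suc j)) v" for v
    by (rule Cons.IH) (simp add: Cons.prems)
  then show ?case using Cons.prems[of 0] by (simp only: fact_sum.simps)
qed

lemma gfs_single_Nil: "gfs [i] z f [] = 0" by simp

lemma gfs_single_Cons:
  "gfs [i] z f (x # v) = (if x = i then f v else 0) + z 0 x * gfs [i] z f v"
  apply (simp only: gfs.simps length_Cons sum.lessThan_Suc_shift)
  apply (simp add: sum_distrib_left if_distrib mult.assoc cong: if_cong)
  done



lemma upper_tri_mmul:
  assumes "upper_tri k A" "upper_tri k B" shows "upper_tri k (mmul k A B)"
  unfolding upper_tri_def
proof (intro allI impI)
  fix i j assume "mmul k A B i j \<noteq> 0"
  then obtain l where "A i l * B l j \<noteq> 0" unfolding mmul_def by (meson sum.not_neutral_contains_not_neutral)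
  then have "A i l \<noteq> 0" "B l j \<noteq> 0" by auto
  then show "i \<le> j \<and> j < k" using assms unfolding upper_tri_def by fastforce
qed

lemma wmat_upper:
  "(\<forall>x\<in>set v. upper_tri k (u x)) \<Longrightarrow> upper_tri k (wmat k u v)"
proof (induction v)
  case Nil then show ?case by (auto simp: upper_tri_def mone_def)
next
  case (Cons x v) then show ?case by (simp add: upper_tri_mmul)
qed

lemma upper_triD: "upper_tri k A \<Longrightarrow> \<not> (i \<le> j \<and> j < k) \<Longrightarrow> A i j = 0"
  unfolding upper_tri_def by blast

lemma wmat_diag:
  "(\<forall>x\<in>set v. upper_tri k (u x)) \<Longrightarrow> s < k \<Longrightarrow> wmat k u v s s = prod_list (map (\<lambda>x. u x s s) v)"
proof (induction v)
  case Nil then show ?case by (simp add: mone_def)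
next
  case (Cons x v)
  have up: "upper_tri k (wmat k u v)" using Cons.prems by (simp add: wmat_upper)
  have "wmat k u (x # v) s s = (\<Sum>l<k. u x s l * wmat k u v l s)" by (simp add: mmul_def)
  also have "\<dots> = (\<Sum>l\<in>{s}. u x s l * wmat k u v l s)"
  proof (rule sum.mono_neutral_right)
    show "{s} \<subseteq> {..<k}" using Cons.prems by simp
    show "\<forall>l\<in>{..<k} - {s}. u x s l * wmat k u v l s = 0"
    proof
      fix l assume "l \<in> {..<k} - {s}"
      then show "u x s l * wmat k u v l s = 0"
        using upper_triD[OF up, of l s] upper_triD[of k "u x" s l] Cons.prems(1)
        by (cases "l < s") auto
    qed
  qed simp
  finally show ?case using Cons by simp
qed

lemma wmat_step:
  assumes up: "\<forall>x<m. upper_tri k (u x)" and "set v \<subseteq> {..<m}" and "s < t" "t < k"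
  shows "wmat k u v s t = (\<Sum>j\<in>{s<..t}. \<Sum>i<m. u i s j * gfs [i] (\<lambda>_. \<lambda>x. u x s s) (\<lambda>v2. wmat k u v2 j t) v)"
  using assms(2)
proof (induction v)
  case Nil then show ?case using \<open>s < t\<close> by (simp add: mone_def)
next
  case (Cons x v)
  have xm: "x < m" and vm: "set v \<subseteq> {..<m}" using Cons.prems by auto
  have upv: "upper_tri k (wmat k u v)" using vm up by (intro wmat_upper) auto
  have upx: "upper_tri k (u x)" using up xm by auto
  have "wmat k u (x # v) s t = (\<Sum>l<k. u x s l * wmat k u v l t)" by (simp add: mmul_def)
  also have "\<dots> = (\<Sum>l\<in>{s..t}. u x s l * wmat k u v l t)"
  proof (rule sum.mono_neutral_right)
    show "{s..t} \<subseteq> {..<k}" using \<open>t < k\<close> by auto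
    show "\<forall>l\<in>{..<k} - {s..t}. u x s l * wmat k u v l t = 0"
      using upper_triD[OF upv] upper_triD[OF upx] by auto
  qed simp
  also have "{s..t} = insert s {s<..t}" using \<open>s < t\<close> by auto
  also have "(\<Sum>l\<in>insert s {s<..t}. u x s l * wmat k u v l t)
      = u x s s * wmat k u v s t + (\<Sum>l\<in>{s<..t}. u x s l * wmat k u v l t)" by simp
  also have "wmat k u v s t = (\<Sum>j\<in>{s<..t}. \<Sum>i<m. u i s j * gfs [i] (\<lambda>_. \<lambda>x. u x s s) (\<lambda>v2. wmat k u v2 j t) v)"
    using Cons.IH vm by simp
  finally have L: "wmat k u (x # v) s t = u x s s * (\<Sum>j\<in>{s<..t}. \<Sum>i<m. u i s j * gfs [i] (\<lambda>_. \<lambda>x. u x s s) (\<lambda>v2. wmat k u v2 j t) v)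
      + (\<Sum>l\<in>{s<..t}. u x s l * wmat k u v l t)" .
  have d: "(\<Sum>i<m. u i s j * (if x = i then wmat k u v j t else 0)) = u x s j * wmat k u v j t" for j
    using xm by (simp add: if_distrib[of "\<lambda>q. u _ s j * q"] sum.delta cong: if_cong)
  have "(\<Sum>j\<in>{s<..t}. \<Sum>i<m. u i s j * gfs [i] (\<lambda>_. \<lambda>x. u x s s) (\<lambda>v2. wmat k u v2 j t) (x # v))
     = (\<Sum>j\<in>{s<..t}. \<Sum>i<m. u i s j * (if x = i then wmat k u v j t else 0)
           + u x s s * (u i s j * gfs [i] (\<lambda>_. \<lambda>x. u x s s) (\<lambda>v2. wmat k u v2 j t) v))"
    by (simp only: gfs_single_Cons) (simp add: algebra_simps)
  also have "\<dots> = (\<Sum>l\<in>{s<..t}. u x s l * wmat k u v l t)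
      + u x s s * (\<Sum>j\<in>{s<..t}. \<Sum>i<m. u i s j * gfs [i] (\<lambda>_. \<lambda>x. u x s s) (\<lambda>v2. wmat k u v2 j t) v)"
    by (simp only: sum.distrib d sum_distrib_left)
  finally show ?case using L by simp
qed



definition Esum :: "(nat list \<Rightarrow> 'a::comm_ring_1) \<Rightarrow> nat \<Rightarrow> (nat \<Rightarrow> nat \<Rightarrow> nat \<Rightarrow> 'a) \<Rightarrow> nat \<Rightarrow> nat \<Rightarrow> nat list \<Rightarrow> (nat \<Rightarrow> nat \<Rightarrow> 'a) \<Rightarrow> 'a" where
  "Esum p k u s t is z = (\<Sum>w\<in>{w. p w \<noteq> 0}. p w * gfs is z (\<lambda>v. wmat k u v s t) w)"

lemma nc_polyD: "nc_poly m p \<Longrightarrow> p w \<noteq> 0 \<Longrightarrow> set w \<subseteq> {..<m}"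
  unfolding nc_poly_def by blast

lemma peval_Esum: "peval k p u s t = Esum p k u s t [] z"
  by (simp add: peval_def Esum_def)

lemma Esum_base:
  assumes "nc_poly m p" "\<forall>x<m. upper_tri k (u x)" "s < k"
  shows "Esum p k u s s is z = pcomm p is (\<lambda>a. if a < length is then z a else (\<lambda>x. u x s s))"
  unfolding Esum_def pcomm_def
proof (rule sum.cong)
  fix w assume "w \<in> {w. p w \<noteq> 0}"
  then have wm: "set w \<subseteq> {..<m}" using assms(1) nc_polyD by blast
  have "gfs is z (\<lambda>v. wmat k u v s s) w = gfs is z (\<lambda>v. prod_list (map (\<lambda>x. u x s s) v)) w"
  proof (rule gfs_cong)
    fix v assume "set v \<subseteq> set w"
    then have "\<forall>x\<in>set v. upper_tri k (u x)" using wm assms(2) by auto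
    then show "wmat k u v s s = prod_list (map (\<lambda>x. u x s s) v)" using wmat_diag assms(3) by blast
  qed
  then show "p w * gfs is z (\<lambda>v. wmat k u v s s) w = p w * fact_sum is (\<lambda>a. if a < length is then z a else (\<lambda>x. u x s s)) w"
    by (simp add: gfs_prod)
qed simp

lemma Esum_step:
  assumes "nc_poly m p" "\<forall>x<m. upper_tri k (u x)" "s < t" "t < k"
  shows "Esum p k u s t is z = (\<Sum>j\<in>{s<..t}. \<Sum>i<m. u i s j *
      Esum p k u j t (is @ [i]) (\<lambda>a. if a < length is then z a else (\<lambda>x. u x s s)))"
proof -
  have "p w * gfs is z (\<lambda>v. wmat k u v s t) w = (\<Sum>j\<in>{s<..t}. \<Sum>i<m. u i s j *
      (p w * gfs (is @ [i]) (\<lambda>a. if a < length is then z a else (\<lambda>x. u x s s)) (\<lambda>v. wmat k u v j t) w))"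
    if "p w \<noteq> 0" for w
  proof -
    have wm: "set w \<subseteq> {..<m}" using assms(1) nc_polyD that by blast
    have "gfs is z (\<lambda>v. wmat k u v s t) w = gfs is z (\<lambda>v. \<Sum>j\<in>{s<..t}. \<Sum>i<m. u i s j * gfs [i] (\<lambda>_. \<lambda>x. u x s s) (\<lambda>v2. wmat k u v2 j t) v) w"
    proof (rule gfs_cong)
      fix v assume "set v \<subseteq> set w"
      then have "set v \<subseteq> {..<m}" using wm by auto
      then show "wmat k u v s t = (\<Sum>j\<in>{s<..t}. \<Sum>i<m. u i s j * gfs [i] (\<lambda>_. \<lambda>x. u x s s) (\<lambda>v2. wmat k u v2 j t) v)"
        using wmat_step[OF assms(2) _ assms(3,4)] by blast
    qed
    also have "\<dots> = (\<Sum>j\<in>{s<..t}. \<Sum>i<m. u i s j * gfs is z (\<lambda>v. gfs [i] (\<lambda>_. \<lambda>x. u x s s) (\<lambda>v2. wmat k u v2 j t) v) w)"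
      by (simp add: gfs_sum gfs_scale)
    also have "\<dots> = (\<Sum>j\<in>{s<..t}. \<Sum>i<m. u i s j * gfs (is @ [i]) (\<lambda>a. if a < length is then z a else (\<lambda>x. u x s s)) (\<lambda>v. wmat k u v j t) w)"
      by (simp only: gfs_append)
    finally show ?thesis by (simp add: sum_distrib_left algebra_simps)
  qed
  then have "Esum p k u s t is z = (\<Sum>w\<in>{w. p w \<noteq> 0}. \<Sum>j\<in>{s<..t}. \<Sum>i<m. u i s j *
      (p w * gfs (is @ [i]) (\<lambda>a. if a < length is then z a else (\<lambda>x. u x s s)) (\<lambda>v. wmat k u v j t) w))"
    unfolding Esum_def by (intro sum.cong) auto
  also have "\<dots> = (\<Sum>j\<in>{s<..t}. \<Sum>i<m. \<Sum>w\<in>{w. p w \<noteq> 0}. u i s j *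
      (p w * gfs (is @ [i]) (\<lambda>a. if a < length is then z a else (\<lambda>x. u x s s)) (\<lambda>v. wmat k u v j t) w))"
    by (subst sum.swap) (simp add: sum.swap[of _ "{..<m}"])
  also have "\<dots> = (\<Sum>j\<in>{s<..t}. \<Sum>i<m. u i s j *
      Esum p k u j t (is @ [i]) (\<lambda>a. if a < length is then z a else (\<lambda>x. u x s s)))"
    unfolding Esum_def by (simp add: sum_distrib_left)
  finally show ?thesis .
qed

lemma Esum_vanish:
  assumes "nc_poly m p" "\<forall>x<m. upper_tri k (u x)"
    and P: "\<And>is z. length is \<le> d \<Longrightarrow> set is \<subseteq> {..<m} \<Longrightarrow> pcomm p is z = 0"
  shows "s \<le> t \<Longrightarrow> t < k \<Longrightarrow> set is \<subseteq> {..<m} \<Longrightarrow> length is + (t - s) \<le> d \<Longrightarrow> Esum p k u s t is z = 0"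
proof (induction "t - s" arbitrary: s "is" z rule: less_induct)
  case less
  show ?case
  proof (cases "s = t")
    case True
    then show ?thesis using Esum_base[OF assms(1,2)] less.prems P by simp
  next
    case False
    then have st: "s < t" using less.prems by simp
    have "Esum p k u j t (is @ [i]) z' = 0" if "j \<in> {s<..t}" "i < m" for j i z'
      using that less.prems by (intro less.hyps) auto
    then show ?thesis using Esum_step[OF assms(1,2) st less.prems(2)] by simp
  qed
qed



lemma upper_tri_Suc: "upper_tri k A \<Longrightarrow> upper_tri (Suc k) A"
  unfolding upper_tri_def by fastforce

lemma wmat_Suc:
  assumes "\<forall>x. upper_tri k (u x)"
  shows "i < k \<Longrightarrow> j < k \<Longrightarrow> wmat (Suc k) u w i j = wmat k u w i j"
proof (induction w arbitrary: i)
  case Nil then show ?case by (simp add: mone_def)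
next
  case (Cons x w)
  have "u x i k = 0" using assms upper_triD by blast
  then show ?case using Cons by (simp add: mmul_def)
qed

lemma is_PI_Suc:
  fixes p :: "nat list \<Rightarrow> 'a::comm_ring_1"
  assumes H: "is_PI (Suc k) p" shows "is_PI k p"
  unfolding is_PI_def
proof (intro allI impI)
  fix u :: "nat \<Rightarrow> nat \<Rightarrow> nat \<Rightarrow> 'a" and i j
  assume up: "\<forall>x. upper_tri k (u x)" and ij: "i < k" "j < k"
  have up': "\<forall>x. upper_tri (Suc k) (u x)" using up upper_tri_Suc by blast
  have "peval k p u i j = peval (Suc k) p u i j"
    unfolding peval_def using wmat_Suc[OF up ij] by simp
  then show "peval k p u i j = 0" using H up' ij unfolding is_PI_def by simp
qed

lemma is_PI_le: "is_PI r p \<Longrightarrow> j \<le> r \<Longrightarrow> is_PI j p"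
proof (induction r)
  case 0 then show ?case by simp
next
  case (Suc r) then show ?case using is_PI_Suc le_Suc_eq by blast
qed

lemma pcomm_cong: "(\<And>a. a \<le> length is \<Longrightarrow> z a = z' a) \<Longrightarrow> pcomm p is z = pcomm p is z'"
  unfolding pcomm_def using fact_sum_cong by (metis (no_types, lifting) sum.cong)

lemma bidiag:
  assumes np: "nc_poly m p" and PI: "is_PI (Suc (length is0)) p" and im: "set is0 \<subseteq> {..<m}"
  shows "pcomm p is0 z = 0"
proof -
  define k where "k = length is0"
  define u where "u = (\<lambda>x i j. if i = j \<and> i \<le> k then z i x
      else if j = Suc i \<and> i < k \<and> is0 ! i = x then (1::'a) else 0)"
  have up: "\<forall>x. upper_tri (Suc k) (u x)" unfolding upper_tri_def u_def by auto
  have upm: "\<forall>x<m. upper_tri (Suc k) (u x)" using up by auto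
  have claim: "\<And>s z'. k - s = e \<Longrightarrow> s \<le> k \<Longrightarrow> (\<forall>a<s. z' a = z a) \<Longrightarrow>
      Esum p (Suc k) u s k (take s is0) z' = pcomm p is0 z" for e
  proof (induction e)
    case 0
    then have sk: "s = k" by simp
    have "Esum p (Suc k) u s k (take s is0) z' =
        pcomm p is0 (\<lambda>a. if a < length is0 then z' a else (\<lambda>x. u x k k))"
      using Esum_base[OF np upm, of k] sk k_def by simp
    also have "\<dots> = pcomm p is0 z"
      by (rule pcomm_cong) (use 0 sk k_def in \<open>auto simp: u_def\<close>)
    finally show ?case .
  next
    case (Suc e)
    then have sk: "s < k" by simp
    define z'' where "z'' = (\<lambda>a. if a < length (take s is0) then z' a else (\<lambda>x. u x s s))"
    have sm: "is0 ! s < m" using im sk k_def by (metis lessThan_iff nth_mem subsetD)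
    have E: "Esum p (Suc k) u s k (take s is0) z' =
      (\<Sum>j\<in>{s<..k}. \<Sum>i<m. u i s j * Esum p (Suc k) u j k (take s is0 @ [i]) z'')"
      unfolding z''_def by (rule Esum_step[OF np upm sk]) simp
    have inner: "(\<Sum>i<m. u i s j * Esum p (Suc k) u j k (take s is0 @ [i]) z'')
       = (if j = Suc s then Esum p (Suc k) u j k (take s is0 @ [is0 ! s]) z'' else 0)"
      if "j \<in> {s<..k}" for j
    proof -
      have "(\<Sum>i<m. u i s j * Esum p (Suc k) u j k (take s is0 @ [i]) z'')
          = (\<Sum>i<m. if i = is0 ! s then (if j = Suc s then Esum p (Suc k) u j k (take s is0 @ [i]) z'' else 0) else 0)"
        using that sk by (intro sum.cong) (auto simp: u_def)
      also have "\<dots> = (if j = Suc s then Esum p (Suc k) u j k (take s is0 @ [is0 ! s]) z'' else 0)"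
        using sm by (simp add: sum.delta')
      finally show ?thesis .
    qed
    have "Esum p (Suc k) u s k (take s is0) z' = Esum p (Suc k) u (Suc s) k (take s is0 @ [is0 ! s]) z''"
    proof -
      have "(\<Sum>j\<in>{s<..k}. \<Sum>i<m. u i s j * Esum p (Suc k) u j k (take s is0 @ [i]) z'')
        = (\<Sum>j\<in>{s<..k}. if j = Suc s then Esum p (Suc k) u j k (take s is0 @ [is0 ! s]) z'' else 0)"
        by (rule sum.cong) (simp_all only: inner)
      also have "\<dots> = Esum p (Suc k) u (Suc s) k (take s is0 @ [is0 ! s]) z''"
        using sk by (simp add: sum.delta)
      finally show ?thesis using E by simp
    qed
    also have "take s is0 @ [is0 ! s] = take (Suc s) is0"
      using sk k_def by (simp add: take_Suc_conv_app_nth)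
    also have "Esum p (Suc k) u (Suc s) k (take (Suc s) is0) z'' = pcomm p is0 z"
    proof (rule Suc.IH)
      show "k - Suc s = e" using Suc.prems by simp
      show "Suc s \<le> k" using sk by simp
      show "\<forall>a<Suc s. z'' a = z a"
        using Suc.prems(3) sk k_def by (auto simp: z''_def u_def less_Suc_eq)
    qed
    finally show ?case .
  qed
  have "peval (Suc k) p u 0 k = Esum p (Suc k) u 0 k (take 0 is0) z" by (simp add: peval_Esum)
  also have "\<dots> = pcomm p is0 z" by (rule claim) auto
  finally show ?thesis using PI up unfolding is_PI_def k_def by auto
qed



lemma peval_upper:
  assumes "nc_poly m p" "\<forall>x<m. upper_tri k (u x)"
  shows "upper_tri k (peval k p u)"
  unfolding upper_tri_def
proof (intro allI impI)
  fix i j assume "peval k p u i j \<noteq> 0"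
  then obtain w where w: "p w \<noteq> 0" "wmat k u w i j \<noteq> 0"
  proof -
    obtain w where "p w * wmat k u w i j \<noteq> 0"
      using \<open>peval k p u i j \<noteq> 0\<close> unfolding peval_def
      by (meson sum.not_neutral_contains_not_neutral)
    then have "p w \<noteq> 0" "wmat k u w i j \<noteq> 0" by auto
    then show ?thesis using that by blast
  qed
  have "set w \<subseteq> {..<m}" using assms(1) w(1) nc_polyD by blast
  then have "upper_tri k (wmat k u w)" using assms(2) by (intro wmat_upper) auto
  then show "i \<le> j \<and> j < k" using w(2) unfolding upper_tri_def by blast
qed

theorem lemma3p4:
  fixes p :: "nat list \<Rightarrow> 'a::alg_closed_field" and m n r :: nat
  assumes "m \<ge> 1" and "n \<ge> 2"
    and "nc_poly m p"
    and "ord p = r" and "1 \<le> r" and "r \<le> n - 1"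
  shows "(\<forall>c. peval_scalar p c = 0)
    \<and> (r \<ge> 2 \<longrightarrow>
         (\<forall>k is z. 1 \<le> k \<and> k \<le> r - 1 \<and> length is = k \<and> set is \<subseteq> {..<m} \<longrightarrow> pcomm p is z = 0)
       \<and> (\<forall>u. (\<forall>x<m. upper_tri n (u x)) \<longrightarrow> upper_tri_shift n (r - 1) (peval n p u)))
    \<and> (\<exists>is z. length is = r \<and> set is \<subseteq> {..<m} \<and> pcomm p is z \<noteq> 0)"
proof -
  note np = assms(3)
  have PI1: "is_PI 1 p" and ex: "\<exists>k\<ge>1. is_PI k p \<and> \<not> is_PI (Suc k) p"
    using assms(4,5) unfolding ord_def by (auto split: if_splits)
  have r_def: "r = (LEAST k. k \<ge> 1 \<and> is_PI k p \<and> \<not> is_PI (Suc k) p)"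
    using assms(4) PI1 ex unfolding ord_def by simp
  have "r \<ge> 1 \<and> is_PI r p \<and> \<not> is_PI (Suc r) p"
    unfolding r_def by (rule LeastI_ex) (use ex in auto)
  then have PIr: "is_PI r p" and nPI: "\<not> is_PI (Suc r) p" by auto
  have PC: "pcomm p is z = 0" if "length is \<le> r - 1" "set is \<subseteq> {..<m}" for "is" z
  proof (rule bidiag[OF np _ that(2)])
    show "is_PI (Suc (length is)) p" using is_PI_le[OF PIr] that(1) assms(5) by simp
  qed
  have scal: "peval_scalar p c = pcomm p [] (\<lambda>_. c)" for c
    unfolding peval_scalar_def pcomm_def by simp
  have part1: "\<forall>c. peval_scalar p c = 0" using PC scal by simp
  have part2b: "upper_tri_shift n (r - 1) (peval n p u)" if up: "\<forall>x<m. upper_tri n (u x)" for u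
  proof -
    have U: "upper_tri n (peval n p u)" using peval_upper[OF np up] .
    have "peval n p u i j = 0" if "i < n" "j < n" "int j - int i \<le> int (r - 1)" for i j
    proof (cases "i \<le> j")
      case True
      have "Esum p n u i j [] (\<lambda>_. \<lambda>_. 0) = 0"
        by (rule Esum_vanish[OF np up, where d = "r - 1"]) (use PC True that in simp_all)
      then show ?thesis using peval_Esum[of n p u i j "\<lambda>_ _. 0"] by simp
    next
      case False
      then show ?thesis using upper_triD[OF U] by auto
    qed
    then show ?thesis using U unfolding upper_tri_shift_def by blast
  qed
  have part3: "\<exists>is z. length is = r \<and> set is \<subseteq> {..<m} \<and> pcomm p is z \<noteq> 0"
  proof (rule ccontr)
    assume "\<not> ?thesis"
    then have H: "pcomm p is z = 0" if "length is = r" "set is \<subseteq> {..<m}" for "is" z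
      using that by blast
    have PC': "pcomm p is z = 0" if "length is \<le> r" "set is \<subseteq> {..<m}" for "is" z
      using PC H that by (cases "length is = r") auto
    have "is_PI (Suc r) p"
      unfolding is_PI_def
    proof (intro allI impI)
      fix u :: "nat \<Rightarrow> nat \<Rightarrow> nat \<Rightarrow> 'a" and i j
      assume up0: "\<forall>x. upper_tri (Suc r) (u x)" and ij: "i < Suc r" "j < Suc r"
      have up: "\<forall>x<m. upper_tri (Suc r) (u x)" using up0 by auto
      have U: "upper_tri (Suc r) (peval (Suc r) p u)" using peval_upper[OF np up] .
      show "peval (Suc r) p u i j = 0"
      proof (cases "i \<le> j")
        case True
        have "Esum p (Suc r) u i j [] (\<lambda>_. \<lambda>_. 0) = 0"
          by (rule Esum_vanish[OF np up, where d = r]) (use PC' True ij in simp_all)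
        then show ?thesis using peval_Esum[of "Suc r" p u i j "\<lambda>_ _. 0"] by simp
      next
        case False
        then show ?thesis using upper_triD[OF U] by auto
      qed
    qed
    then show False using nPI by simp
  qed
  have part2a: "\<forall>k is z. 1 \<le> k \<and> k \<le> r - 1 \<and> length is = k \<and> set is \<subseteq> {..<m} \<longrightarrow> pcomm p is z = 0"
    using PC by auto
  show ?thesis using part1 part2a part2b part3 by blast
qed


end
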